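(* For any locale $L$, its DeMorganization (the largest dense extremally disconnected sublocale of $L$) is a fitted sublocale of $L$.
   Context: A frame (locale) $L$ is a complete lattice in which finite meets distribute over arbitrary joins; $a\to b$ denotes the Heyting implication and $a^*=a\to0$ the pseudocomplement. A sublocale of $L$ is a subset $S\subseteq L$ closed under arbitrary meets such that $a\to s\in S$ for all $a\in L$, $s\in S$; it is a frame under the inherited order. A sublocale $S$ is dense if $\bigwedge S=0$. A frame is extremally disconnected if $x^*\vee x^{**}=1$ for all its elements. The open sublocale of $a\in L$ is $\mathfrak{o}(a)=\{a\to b\mid b\in L\}$. A sublocale is fitted if it is an intersection of a family of open sublocales. *)

theory Defs
  imports Main
begin

definition frame :: "'a::complete_lattice itself \<Rightarrow> bool" where
  "frame _ \<longleftrightarrow> (\<forall>(a::'a) A. inf a (Sup A) = Sup ((inf a) ` A))"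

definition himp :: "'a::complete_lattice \<Rightarrow> 'a \<Rightarrow> 'a" where
  "himp a b = Sup {c. inf a c \<le> b}"

definition is_sublocale :: "'a::complete_lattice set \<Rightarrow> bool" where
  "is_sublocale S \<longleftrightarrow> (\<forall>A \<subseteq> S. Inf A \<in> S) \<and> (\<forall>a s. s \<in> S \<longrightarrow> himp a s \<in> S)"

definition join_in :: "'a::complete_lattice set \<Rightarrow> 'a set \<Rightarrow> 'a" where
  "join_in S A = Inf {s \<in> S. \<forall>a\<in>A. a \<le> s}"

definition bot_in :: "'a::complete_lattice set \<Rightarrow> 'a" where
  "bot_in S = Inf S"

definition pcomp_in :: "'a::complete_lattice set \<Rightarrow> 'a \<Rightarrow> 'a" where
  "pcomp_in S x = join_in S {y \<in> S. inf x y = bot_in S}"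

definition dense_sublocale :: "'a::complete_lattice set \<Rightarrow> bool" where
  "dense_sublocale S \<longleftrightarrow> is_sublocale S \<and> Inf S = bot"

text \<open>S (as a frame) is extremally disconnected: x* \/ x** = 1 for all x in S
  (top of S is the top of L, since S contains Inf {}).\<close>
definition extremally_disconnected_in :: "'a::complete_lattice set \<Rightarrow> bool" where
  "extremally_disconnected_in S \<longleftrightarrow>
     (\<forall>x\<in>S. join_in S {pcomp_in S x, pcomp_in S (pcomp_in S x)} = top)"

definition open_sublocale :: "'a::complete_lattice \<Rightarrow> 'a set" where
  "open_sublocale a = {himp a b | b. True}"

definition fitted :: "'a::complete_lattice set \<Rightarrow> bool" where
  "fitted S \<longleftrightarrow> (\<exists>F. (\<forall>T\<in>F. \<exists>a. T = open_sublocale a) \<and> S = \<Inter>F)"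

definition is_demorganization :: "'a::complete_lattice set \<Rightarrow> bool" where
  "is_demorganization S \<longleftrightarrow>
     dense_sublocale S \<and> extremally_disconnected_in S \<and>
     (\<forall>T. dense_sublocale T \<and> extremally_disconnected_in T \<longrightarrow> T \<subseteq> S)"

end

theory Submission
  imports Defs
begin

lemma himp_iff:
  assumes F: "frame TYPE('a::complete_lattice)"
  shows "((c::'a) \<le> himp a b) = (inf a c \<le> b)"
proof
  assume "c \<le> himp a b"
  hence "inf a c \<le> inf a (Sup {c. inf a c \<le> b})" by (auto simp: himp_def intro: le_infI2)
  also have "\<dots> = Sup (inf a ` {c. inf a c \<le> b})" using F unfolding frame_def by blast
  also have "\<dots> \<le> b" by (auto intro: Sup_least)
  finally show "inf a c \<le> b" .
next
  assume "inf a c \<le> b" thus "c \<le> himp a b" unfolding himp_def by (auto intro: Sup_upper)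
qed

lemma inf_sup_distrib_fr:
  assumes F: "frame TYPE('a::complete_lattice)"
  shows "inf (a::'a) (sup b c) = sup (inf a b) (inf a c)"
proof -
  have "inf a (Sup {b, c}) = Sup (inf a ` {b, c})" using F unfolding frame_def by blast
  thus ?thesis by simp
qed

lemma himp_ge: assumes F: "frame TYPE('a::complete_lattice)" shows "(s::'a) \<le> himp a s"
  using himp_iff[OF F] by auto

lemma himp_top: assumes F: "frame TYPE('a::complete_lattice)" and "(a::'a) \<le> s"
  shows "himp a s = top"
  using himp_iff[OF F, of top a s] assms(2) by (simp add: top_unique)

lemma himp_mp: assumes F: "frame TYPE('a::complete_lattice)" shows "inf (a::'a) (himp a b) \<le> b"
  using himp_iff[OF F] by blast

lemma himp_swap: assumes F: "frame TYPE('a::complete_lattice)"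
  shows "himp (a::'a) (himp c s) = himp c (himp a s)"
proof -
  have "\<And>x. (x \<le> himp a (himp c s)) = (x \<le> himp c (himp a s))"
    using himp_iff[OF F] by (simp add: inf_left_commute)
  thus ?thesis by (meson order.antisym order.refl)
qed

lemma himp_mono2: assumes F: "frame TYPE('a::complete_lattice)" and "(s::'a) \<le> t"
  shows "himp a s \<le> himp a t"
  using himp_iff[OF F] assms(2) himp_mp[OF F, of a s] order.trans by blast

definition pc :: "'a::complete_lattice \<Rightarrow> 'a" where "pc x = himp x bot"

lemma pc_inf: assumes F: "frame TYPE('a::complete_lattice)" shows "inf (x::'a) (pc x) = bot"
  using himp_mp[OF F, of x bot] by (simp add: pc_def bot_unique)

lemma le_pc: assumes F: "frame TYPE('a::complete_lattice)" shows "((c::'a) \<le> pc x) = (inf x c = bot)"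
  using himp_iff[OF F, of c x bot] by (simp add: pc_def bot_unique)

lemma le_pcpc: assumes F: "frame TYPE('a::complete_lattice)" shows "(x::'a) \<le> pc (pc x)"
  using le_pc[OF F] pc_inf[OF F] by (simp add: inf_commute)

lemma pc3: assumes F: "frame TYPE('a::complete_lattice)" shows "pc (pc (pc (x::'a))) = pc x"
proof (rule order.antisym)
  have "inf x (pc (pc (pc x))) \<le> inf (pc (pc x)) (pc (pc (pc x)))"
    using le_pcpc[OF F, of x] inf_mono by blast
  also have "\<dots> = bot" using pc_inf[OF F] by blast
  finally show "pc (pc (pc x)) \<le> pc x" using le_pc[OF F] bot_unique by blast
  show "pc x \<le> pc (pc (pc x))" using le_pcpc[OF F] .
qed

definition dd :: "'a::complete_lattice \<Rightarrow> 'a" where "dd x = sup (pc x) (pc (pc x))"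

lemma pc_dd: assumes F: "frame TYPE('a::complete_lattice)" shows "himp (dd (x::'a)) bot = bot"
proof -
  let ?c = "himp (dd x) bot"
  have "inf (dd x) ?c = bot" using himp_mp[OF F, of "dd x" bot] bot_unique by blast
  hence "sup (inf ?c (pc x)) (inf ?c (pc (pc x))) = bot"
    using inf_sup_distrib_fr[OF F, of ?c] by (simp add: dd_def inf_commute)
  hence "inf (pc x) ?c = bot" "inf (pc (pc x)) ?c = bot" by (auto simp: inf_commute)
  hence "?c \<le> pc (pc x)" "?c \<le> pc (pc (pc x))" using le_pc[OF F] by blast+
  hence "?c \<le> inf (pc (pc x)) (pc (pc (pc x)))" by simp
  also have "\<dots> = bot" using pc_inf[OF F] by blast
  finally show ?thesis using bot_unique by blast
qed

definition TT :: "'a::complete_lattice set" where "TT = {s. \<forall>x. himp (dd x) s = s}"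

lemma open_mem: assumes F: "frame TYPE('a::complete_lattice)"
  shows "((s::'a) \<in> open_sublocale a) = (himp a s = s)"
proof
  assume "s \<in> open_sublocale a"
  then obtain b where b: "s = himp a b" by (auto simp: open_sublocale_def)
  have "himp a (himp a b) = himp a b"
  proof -
    have "\<And>x. (x \<le> himp a (himp a b)) = (x \<le> himp a b)"
      using himp_iff[OF F] by (simp add: inf_assoc[symmetric])
    thus ?thesis by (meson order.antisym order.refl)
  qed
  thus "himp a s = s" using b by simp
next
  assume "himp a s = s" thus "s \<in> open_sublocale a" unfolding open_sublocale_def by (metis (mono_tags, lifting) mem_Collect_eq)
qed

lemma TT_sub: assumes F: "frame TYPE('a::complete_lattice)" shows "is_sublocale (TT :: 'a set)"
  unfolding is_sublocale_def
proof (intro conjI allI impI)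
  fix A :: "'a set" assume A: "A \<subseteq> TT"
  show "Inf A \<in> TT" unfolding TT_def
  proof (safe)
    fix x
    have "himp (dd x) (Inf A) \<le> Inf A"
    proof (rule Inf_greatest)
      fix s assume "s \<in> A"
      hence "himp (dd x) s = s" using A by (auto simp: TT_def)
      moreover have "himp (dd x) (Inf A) \<le> himp (dd x) s" using himp_mono2[OF F, OF Inf_lower[OF \<open>s \<in> A\<close>]] .
      ultimately show "himp (dd x) (Inf A) \<le> s" by simp
    qed
    thus "himp (dd x) (Inf A) = Inf A" using himp_ge[OF F] order.antisym by blast
  qed
next
  fix a s :: 'a assume "s \<in> TT"
  hence "\<And>x. himp (dd x) s = s" by (simp add: TT_def)
  hence "\<And>x. himp (dd x) (himp a s) = himp a s" using himp_swap[OF F, of _ a s] by simp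
  thus "himp a s \<in> TT" unfolding TT_def by simp
qed

lemma bot_TT: assumes F: "frame TYPE('a::complete_lattice)" shows "(bot::'a) \<in> TT"
  using pc_dd[OF F] by (simp add: TT_def)

lemma join_in_max: assumes "m \<in> S" "m \<in> A" "\<forall>a\<in>A. a \<le> m"
  shows "join_in S A = m"
  unfolding join_in_def
  by (rule order.antisym) (use assms in \<open>auto intro: Inf_lower Inf_greatest\<close>)

lemma join_in_le: assumes "u \<in> S" "\<forall>a\<in>A. a \<le> u" shows "join_in S A \<le> u"
  unfolding join_in_def using assms by (auto intro: Inf_lower)

lemma join_in_ge: assumes "a \<in> A" shows "a \<le> join_in S A"
  unfolding join_in_def using assms by (auto intro: Inf_greatest)

lemma join_in_mem: assumes "is_sublocale S" shows "join_in S A \<in> S"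
  using assms unfolding join_in_def is_sublocale_def by auto

lemma pcomp_dense: assumes F: "frame TYPE('a::complete_lattice)" and D: "dense_sublocale U"
  and x: "(x::'a) \<in> U"
  shows "pcomp_in U x = pc x"
proof -
  have sub: "is_sublocale U" and b: "bot_in U = bot" using D by (auto simp: dense_sublocale_def bot_in_def)
  have "Inf U \<in> U" using sub by (auto simp: is_sublocale_def)
  hence "bot \<in> U" using D by (simp add: dense_sublocale_def)
  hence "pc x \<in> U" using sub by (auto simp: is_sublocale_def pc_def)
  thus ?thesis unfolding pcomp_in_def b
    by (intro join_in_max) (auto simp: pc_inf[OF F] le_pc[OF F])
qed

lemma dense_bot: assumes "dense_sublocale U" shows "bot \<in> U"
  using assms by (metis dense_sublocale_def is_sublocale_def order_refl)

lemma TT_dense: assumes F: "frame TYPE('a::complete_lattice)" shows "dense_sublocale (TT::'a set)"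
  unfolding dense_sublocale_def using TT_sub[OF F] Inf_lower[OF bot_TT[OF F]] bot_unique by blast

lemma TT_ed: assumes F: "frame TYPE('a::complete_lattice)" shows "extremally_disconnected_in (TT::'a set)"
  unfolding extremally_disconnected_in_def
proof
  fix x :: 'a assume x: "x \<in> TT"
  have D: "dense_sublocale (TT::'a set)" by (rule TT_dense[OF F])
  have pcm: "pc x \<in> TT" using TT_sub[OF F] bot_TT[OF F] by (auto simp: is_sublocale_def pc_def)
  let ?j = "join_in TT {pc x, pc (pc x)}"
  have j: "?j \<in> TT" using join_in_mem[OF TT_sub[OF F]] .
  have "dd x \<le> ?j" unfolding dd_def by (auto intro: join_in_ge)
  hence "himp (dd x) ?j = top" using himp_top[OF F] by blast
  moreover have "himp (dd x) ?j = ?j" using j by (auto simp: TT_def)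
  ultimately have "?j = top" by simp
  thus "join_in TT {pcomp_in TT x, pcomp_in TT (pcomp_in TT x)} = top"
    using pcomp_dense[OF F D x] pcomp_dense[OF F D pcm] by simp
qed

lemma sub_TT: assumes F: "frame TYPE('a::complete_lattice)" and D: "dense_sublocale U"
  and E: "extremally_disconnected_in U"
  shows "U \<subseteq> (TT::'a set)"
proof
  fix s assume s: "s \<in> U"
  have sub: "is_sublocale U" using D by (simp add: dense_sublocale_def)
  have bU: "bot \<in> U" by (rule dense_bot[OF D])
  show "s \<in> TT" unfolding TT_def
  proof safe
    fix x :: 'a
    let ?y = "pc x"
    have y: "?y \<in> U" using sub bU by (auto simp: is_sublocale_def pc_def)
    have y2: "pc ?y \<in> U" using sub bU by (auto simp: is_sublocale_def pc_def)
    have "join_in U {pcomp_in U ?y, pcomp_in U (pcomp_in U ?y)} = top" using E y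
      by (auto simp: extremally_disconnected_in_def)
    hence J: "join_in U {pc (pc x), pc x} = top"
      using pcomp_dense[OF F D y] pcomp_dense[OF F D y2] pc3[OF F] by simp
    let ?t = "himp (dd x) s"
    have t: "?t \<in> U" using sub s by (auto simp: is_sublocale_def)
    have ts: "himp ?t s \<in> U" using sub s by (auto simp: is_sublocale_def)
    have "inf ?t (dd x) \<le> s" using himp_mp[OF F] by (simp add: inf_commute)
    hence "dd x \<le> himp ?t s" using himp_iff[OF F] by blast
    hence "\<forall>a\<in>{pc (pc x), pc x}. a \<le> himp ?t s" by (auto simp: dd_def)
    hence "join_in U {pc (pc x), pc x} \<le> himp ?t s" by (rule join_in_le[OF ts])
    hence "top \<le> himp ?t s" using J by simp
    hence "?t \<le> himp ?t s" by (simp add: top_unique)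
    hence "?t \<le> s" using himp_iff[OF F] by simp
    thus "himp (dd x) s = s" using himp_ge[OF F] order.antisym by blast
  qed
qed

theorem corollary4p3:
  fixes S :: "'a::complete_lattice set"
  assumes "frame TYPE('a)"
    and "is_demorganization S"
  shows "fitted S"
proof -
  note F = assms(1)
  have D: "dense_sublocale S" and E: "extremally_disconnected_in S"
    and M: "\<And>T. dense_sublocale T \<Longrightarrow> extremally_disconnected_in T \<Longrightarrow> T \<subseteq> S"
    using assms(2) unfolding is_demorganization_def by blast+
  have "S \<subseteq> TT" by (rule sub_TT[OF F D E])
  moreover have "TT \<subseteq> S" by (rule M[OF TT_dense[OF F] TT_ed[OF F]])
  ultimately have 1: "S = TT" by (rule order.antisym)
  have 2: "(TT::'a set) = \<Inter>{open_sublocale (dd x) | x. True}"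
  proof (rule set_eqI)
    fix s :: 'a
    show "(s \<in> TT) = (s \<in> \<Inter>{open_sublocale (dd x) | x. True})"
      unfolding TT_def using open_mem[OF F, of s] by blast
  qed
  show ?thesis unfolding fitted_def
    by (rule exI[of _ "{open_sublocale (dd x) | x. True}"]) (use 1 2 in blast)
qed

end
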